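(* Let $G=(V,E)$ be a simple undirected graph and let $E'\subseteq E^c$ be such that $G+E'$ is not chordal and $G+(E'\setminus\{f\})$ is chordal for every $f\in E'$. If $ax\ge b$ is facet-defining for $\textnormal{conv}(X(G+E'))$ with $a\ge 0$, and $a'\in\mathbb{R}^{E^c}$ is given by $a'_f=a_f$ if $f\in E^c\setminus E'$ and $a'_f=0$ otherwise, then the inequality $$a'x\ \ge\ b\Big(\sum_{f\in E'}x_f-|E'|+1\Big)$$ is facet-defining for $\textnormal{conv}(X(G))$.
   Context: For a graph $H=(V_H,E_H)$, $E^c(H)=\binom{V_H}{2}\setminus E_H$ (here $E^c=E^c(G)$, and $E^c(G+E')=E^c\setminus E'$); $H+F=(V_H,E_H\cup F)$. For $x\in\{0,1\}^{E^c(H)}$, $E(x)=\{f:x_f=1\}$ and $X(H)=\{x\in\{0,1\}^{E^c(H)}:(V_H,E_H\cup E(x))\text{ is chordal}\}$; a graph is chordal if every cycle with at least four vertices has a chord. *)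

theory Defs
  imports "HOL-Analysis.Analysis"
begin

text \<open>Graphs: a finite vertex set V of a finite type 'a, edges are 2-element subsets.
  0/1 vectors over the non-edges are embedded into real^('a set), with all
  coordinates outside the non-edge set fixed to 0 (this changes neither convex
  hulls, affine dimensions, nor faces).\<close>

definition all_pairs :: "'a set \<Rightarrow> 'a set set" where
  "all_pairs V = {{u, v} | u v. u \<in> V \<and> v \<in> V \<and> u \<noteq> v}"

definition simple_graph :: "'a set \<Rightarrow> 'a set set \<Rightarrow> bool" where
  "simple_graph V E \<longleftrightarrow> E \<subseteq> all_pairs V"

definition nonedges :: "'a set \<Rightarrow> 'a set set \<Rightarrow> 'a set set" where
  "nonedges V E = all_pairs V - E"

definition chordal :: "'a set \<Rightarrow> 'a set set \<Rightarrow> bool" where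
  "chordal V E \<longleftrightarrow>
     (\<forall>cs. distinct cs \<and> length cs \<ge> 4 \<and> set cs \<subseteq> V \<and>
        (\<forall>i < length cs. {cs ! i, cs ! ((i + 1) mod length cs)} \<in> E)
      \<longrightarrow> (\<exists>i < length cs. \<exists>j < length cs. i \<noteq> j \<and>
             j \<noteq> (i + 1) mod length cs \<and> i \<noteq> (j + 1) mod length cs \<and>
             {cs ! i, cs ! j} \<in> E))"

definition chordal_completions :: "'a set \<Rightarrow> 'a set set \<Rightarrow> (real ^ ('a::finite set)) set" where
  "chordal_completions V E =
     {x. (\<forall>f \<in> nonedges V E. x $ f = 0 \<or> x $ f = 1) \<and>
         (\<forall>f. f \<notin> nonedges V E \<longrightarrow> x $ f = 0) \<and>
         chordal V (E \<union> {f \<in> nonedges V E. x $ f = 1})}"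

definition facet_defining :: "('n::euclidean_space) set \<Rightarrow> ('n \<Rightarrow> real) \<Rightarrow> ('n \<Rightarrow> real) \<Rightarrow> bool" where
  "facet_defining P g h \<longleftrightarrow>
     (\<forall>x \<in> P. g x \<ge> h x) \<and> {x \<in> P. g x = h x} facet_of P"

end

theory Submission
  imports Defs
begin

definition ind :: "'b set \<Rightarrow> real ^ ('b::finite)" where
  "ind S = (\<chi> f. if f \<in> S then 1 else 0)"

lemma ind_nth[simp]: "ind S $ f = (if f \<in> S then 1 else 0)"
  by (simp add: ind_def)

lemma inner_ind: "ind S \<bullet> x = (\<Sum>f\<in>S. x $ f)"
proof -
  have "ind S \<bullet> x = (\<Sum>i\<in>UNIV. if i \<in> S then x $ i else 0)"
    unfolding inner_vec_def by (rule sum.cong) auto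
  also have "\<dots> = (\<Sum>f\<in>S. x $ f)" by (simp add: sum.If_cases)
  finally show ?thesis .
qed

lemma affine_comb:
  fixes H :: "'v::real_vector set"
  assumes "affine H" "p \<in> H" "finite I" "\<And>i. i \<in> I \<Longrightarrow> p + d i \<in> H"
  shows "p + (\<Sum>i\<in>I. c i *\<^sub>R d i) \<in> H"
proof -
  let ?S = "(\<lambda>x. (-p)+x) ` H"
  have sub: "subspace ?S" using affine_diffs_subspace[OF assms(1,2)] .
  have "d i \<in> ?S" if "i \<in> I" for i
    using assms(4)[OF that] by (auto intro!: image_eqI[where x="p + d i"])
  hence "(\<Sum>i\<in>I. c i *\<^sub>R d i) \<in> ?S"
    by (intro subspace_sum[OF sub] subspace_scale[OF sub]) auto
  then obtain y where "y \<in> H" "(\<Sum>i\<in>I. c i *\<^sub>R d i) = -p + y" by auto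
  thus ?thesis by simp
qed

lemma chordal_near_complete:
  assumes "all_pairs V - {e} \<subseteq> F"
  shows "chordal V F"
  unfolding chordal_def
proof (intro allI impI)
  fix cs :: "'a list"
  assume h: "distinct cs \<and> 4 \<le> length cs \<and> set cs \<subseteq> V \<and>
        (\<forall>i<length cs. {cs ! i, cs ! ((i + 1) mod length cs)} \<in> F)"
  let ?n = "length cs"
  have n4: "?n \<ge> 4" using h by auto
  have inV: "cs ! k \<in> V" if "k < ?n" for k using h that nth_mem by blast
  have ne: "cs ! i \<noteq> cs ! j" if "i < ?n" "j < ?n" "i \<noteq> j" for i j
    using h that nth_eq_iff_index_eq by blast
  have ap: "{cs ! i, cs ! j} \<in> all_pairs V" if "i < ?n" "j < ?n" "i \<noteq> j" for i j
    unfolding all_pairs_def using inV ne that by blast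
  have m1: "(0 + 1) mod ?n = 1" "(2 + 1) mod ?n \<noteq> 0" "(1+1) mod ?n = 2" "(3 + 1) mod ?n \<noteq> 1"
    using n4 by (auto simp: mod_if)
  show "\<exists>i<?n. \<exists>j<?n. i \<noteq> j \<and> j \<noteq> (i + 1) mod ?n \<and> i \<noteq> (j + 1) mod ?n \<and> {cs ! i, cs ! j} \<in> F"
  proof (cases "{cs ! 0, cs ! 2} = e")
    case False
    have "{cs ! 0, cs ! 2} \<in> all_pairs V" by (rule ap) (use n4 in auto)
    hence "{cs ! 0, cs ! 2} \<in> all_pairs V - {e}" using False by auto
    hence "{cs ! 0, cs ! 2} \<in> F" using assms by blast
    moreover have "(0::nat) < ?n" "(2::nat) < ?n" "(2::nat) \<noteq> (0 + 1) mod ?n" "(0::nat) \<noteq> (2 + 1) mod ?n"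
      using n4 m1 by auto
    ultimately show ?thesis by (metis zero_neq_numeral)
  next
    case True
    have "{cs ! 1, cs ! 3} \<noteq> {cs ! 0, cs ! 2}"
    proof -
      have "cs ! 1 \<noteq> cs ! 0" by (rule ne) (use n4 in auto)
      moreover have "cs ! 3 \<noteq> cs ! 0" by (rule ne) (use n4 in auto)
      ultimately show ?thesis by (auto simp: doubleton_eq_iff)
    qed
    moreover have "{cs ! 1, cs ! 3} \<in> all_pairs V" by (rule ap) (use n4 in auto)
    ultimately have "{cs ! 1, cs ! 3} \<in> all_pairs V - {e}" using True by auto
    hence "{cs ! 1, cs ! 3} \<in> F" using assms by blast
    moreover have "(1::nat) < ?n" "(3::nat) < ?n" "(3::nat) \<noteq> (1 + 1) mod ?n" "(1::nat) \<noteq> (3 + 1) mod ?n"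
      using n4 m1 by auto
    ultimately show ?thesis by (metis numeral_One numeral_eq_iff semiring_norm(86))
  qed
qed


theorem mainTheorem14:
  fixes V :: "'a::finite set" and E E' :: "'a set set"
    and a :: "real ^ ('a set)" and b :: real
  assumes "simple_graph V E"
    and "E' \<subseteq> nonedges V E"
    and "\<not> chordal V (E \<union> E')"
    and "\<forall>f \<in> E'. chordal V (E \<union> (E' - {f}))"
    and "\<forall>f. f \<notin> nonedges V (E \<union> E') \<longrightarrow> a $ f = 0"
    and "\<forall>f \<in> nonedges V (E \<union> E'). a $ f \<ge> 0"
    and "facet_defining (convex hull chordal_completions V (E \<union> E')) (\<lambda>x. a \<bullet> x) (\<lambda>x. b)"
  shows "facet_defining (convex hull chordal_completions V E)
           (\<lambda>x. (\<chi> f. if f \<in> nonedges V E - E' then a $ f else 0) \<bullet> x)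
           (\<lambda>x. b * ((\<Sum>f \<in> E'. x $ f) - real (card E') + 1))"
proof -
  note hE' = assms(2) and hmin = assms(4) and a0 = assms(5) and apos = assms(6)
  define N where "N = nonedges V E"
  define E2 where "E2 = nonedges V (E \<union> E')"
  define X where "X = chordal_completions V E"
  define XQ where "XQ = chordal_completions V (E \<union> E')"
  define P where "P = convex hull X"
  define Q where "Q = convex hull XQ"
  define one' :: "real ^ ('a set)" where "one' = ind E'"
  have fin: "finite (S :: 'a set set)" for S by simp
  have E2N: "E2 = N - E'" unfolding E2_def N_def nonedges_def by auto
  have NE: "N = E2 \<union> E'" using E2N hE' unfolding N_def by auto
  have disj: "E2 \<inter> E' = {}" using E2N by auto
  have a'eq: "(\<chi> f. if f \<in> nonedges V E - E' then a $ f else 0) = a"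
    using a0 E2N unfolding N_def E2_def[symmetric] by (auto simp: vec_eq_iff)
  define h where "h = (\<lambda>x::real^('a set). b * ((\<Sum>f \<in> E'. x $ f) - real (card E') + 1))"
  define w where "w = a - b *\<^sub>R one'"
  define c0 where "c0 = b - b * real (card E')"
  have one'x: "one' \<bullet> x = (\<Sum>f \<in> E'. x $ f)" for x unfolding one'_def by (rule inner_ind)
  have wx: "a \<bullet> x - h x = w \<bullet> x - c0" for x
    unfolding w_def c0_def h_def by (simp add: inner_diff_left one'x algebra_simps)
  have a0': "\<forall>f. f \<notin> E2 \<longrightarrow> a $ f = 0" using a0 unfolding E2_def by simp
  have a_one': "a \<bullet> one' = 0"
    using one'x[of a] a0' disj by (auto simp: inner_commute intro!: sum.neutral)
  have one'one': "one' \<bullet> one' = real (card E')" using one'x[of one'] by (simp add: one'_def)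
  have facQ: "(\<forall>y\<in>Q. a \<bullet> y \<ge> b)" "{y \<in> Q. a \<bullet> y = b} facet_of Q"
    using assms(7) unfolding facet_defining_def Q_def XQ_def by auto
  define FQ where "FQ = {y \<in> Q. a \<bullet> y = b}"
  have XQQ: "XQ \<subseteq> Q" unfolding Q_def by (rule hull_subset)
  have XP: "X \<subseteq> P" unfolding P_def by (rule hull_subset)
  have Z2conv: "convex {y::real^('a set). \<forall>f. f \<notin> E2 \<longrightarrow> y $ f = 0}"
    unfolding convex_def by auto
  have Qsupp: "\<forall>y\<in>Q. \<forall>f. f \<notin> E2 \<longrightarrow> y $ f = 0"
  proof -
    have "XQ \<subseteq> {y. \<forall>f. f \<notin> E2 \<longrightarrow> y $ f = 0}"
      unfolding XQ_def chordal_completions_def E2_def by auto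
    hence "Q \<subseteq> {y. \<forall>f. f \<notin> E2 \<longrightarrow> y $ f = 0}" unfolding Q_def
      by (rule hull_minimal) (rule Z2conv)
    thus ?thesis by auto
  qed
  have Qnonneg: "\<forall>y\<in>Q. a \<bullet> y \<ge> 0"
  proof -
    have "XQ \<subseteq> {y. a \<bullet> y \<ge> 0}"
    proof
      fix y assume y: "y \<in> XQ"
      have "a $ f * y $ f \<ge> 0" for f
        using y apos a0 unfolding XQ_def chordal_completions_def E2_def by (cases "f \<in> nonedges V (E \<union> E')") auto
      thus "y \<in> {y. a \<bullet> y \<ge> 0}" by (auto simp: inner_vec_def intro!: sum_nonneg)
    qed
    hence "Q \<subseteq> {y. a \<bullet> y \<ge> 0}" unfolding Q_def
      by (rule hull_minimal) (rule convex_halfspace_ge)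
    thus ?thesis by auto
  qed
  have FQne: "FQ \<noteq> {}" and FQdim: "aff_dim FQ = aff_dim Q - 1"
    using facQ(2) unfolding FQ_def facet_of_def by auto
  then obtain y0 where y0: "y0 \<in> Q" "a \<bullet> y0 = b" unfolding FQ_def by auto
  have b0: "b \<ge> 0" using y0 Qnonneg by auto
  obtain qQ where qQ: "qQ \<in> Q" "a \<bullet> qQ \<noteq> b"
  proof -
    have "FQ \<noteq> Q" using FQdim by auto
    thus ?thesis using that unfolding FQ_def by auto
  qed
  have E2all: "E \<union> E' \<union> E2 \<supseteq> all_pairs V" unfolding E2_def nonedges_def by auto
  have Z2hull: "v \<in> affine hull XQ" if v: "\<forall>f. f \<notin> E2 \<longrightarrow> v $ f = 0" for v
  proof -
    have base: "ind E2 \<in> XQ"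
    proof -
      have "{f \<in> nonedges V (E \<union> E'). ind E2 $ f = 1} = E2" unfolding E2_def by auto
      moreover have "chordal V (E \<union> E' \<union> E2)"
        by (rule chordal_near_complete[where e="{}"]) (use E2all in auto)
      ultimately show ?thesis unfolding XQ_def chordal_completions_def E2_def by auto
    qed
    have step: "ind E2 + - ind {f} \<in> affine hull XQ" if f: "f \<in> E2" for f
    proof -
      have "{g \<in> nonedges V (E \<union> E'). (ind E2 + - ind {f}) $ g = 1} = E2 - {f}" unfolding E2_def by auto
      moreover have "chordal V (E \<union> E' \<union> (E2 - {f}))"
        by (rule chordal_near_complete[where e="f"]) (use E2all in auto)
      ultimately have "ind E2 + - ind {f} \<in> XQ"
        using f unfolding XQ_def chordal_completions_def E2_def by auto
      thus ?thesis by (rule hull_inc)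
    qed
    have "ind E2 + (\<Sum>f\<in>E2. (1 - v $ f) *\<^sub>R (- ind {f})) \<in> affine hull XQ"
      by (rule affine_comb[OF affine_affine_hull hull_inc[OF base] fin step])
    moreover have "ind E2 + (\<Sum>f\<in>E2. (1 - v $ f) *\<^sub>R (- ind {f})) = v"
      unfolding vec_eq_iff
    proof
      fix g
      show "(ind E2 + (\<Sum>f\<in>E2. (1 - v $ f) *\<^sub>R (- ind {f}))) $ g = v $ g"
        using v by (cases "g \<in> E2") (auto simp: if_distrib sum.If_cases)
    qed
    ultimately show ?thesis by simp
  qed

  have HQ: "affine hull Q \<subseteq> affine hull (insert qQ FQ)"
  proof -
    have "affine hull FQ \<subseteq> {x. a \<bullet> x = b}"
      by (rule hull_minimal) (auto simp: FQ_def affine_hyperplane)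
    hence nq: "qQ \<notin> affine hull FQ" using qQ by auto
    have dimeq: "aff_dim (affine hull (insert qQ FQ)) = aff_dim (affine hull Q)"
      using aff_dim_insert[of qQ FQ] nq FQdim by simp
    have sub: "affine hull (insert qQ FQ) \<subseteq> affine hull Q"
      by (rule hull_mono) (use qQ in \<open>auto simp: FQ_def\<close>)
    have "affine hull (insert qQ FQ) = affine hull Q"
      by (rule affine_dim_equal[OF affine_affine_hull affine_affine_hull _ sub dimeq]) auto
    thus ?thesis by simp
  qed
  define HQ where "HQ = affine hull (insert qQ FQ)"
  have Z2HQ: "v \<in> HQ" if "\<forall>f. f \<notin> E2 \<longrightarrow> v $ f = 0" for v
    using Z2hull[OF that] hull_mono[OF XQQ, of affine] HQ unfolding HQ_def by blast
  have liftX: "one' + y \<in> X" if y: "y \<in> XQ" for y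
  proof -
    have yz: "\<forall>f. f \<notin> E2 \<longrightarrow> y $ f = 0" "\<forall>f\<in>E2. y $ f = 0 \<or> y $ f = 1"
      "chordal V (E \<union> E' \<union> {f \<in> E2. y $ f = 1})"
      using y unfolding XQ_def chordal_completions_def E2_def by auto
    have set: "{f \<in> N. (one' + y) $ f = 1} = E' \<union> {f \<in> E2. y $ f = 1}"
      using yz(1) NE disj unfolding one'_def by auto
    have ch: "chordal V (E \<union> {f \<in> N. (one' + y) $ f = 1})"
      using yz(3) unfolding set by (simp add: Un_assoc)
    have "\<forall>f\<in>N. (one' + y) $ f = 0 \<or> (one' + y) $ f = 1" "\<forall>f. f \<notin> N \<longrightarrow> (one' + y) $ f = 0"
      using yz NE disj by (auto simp: one'_def)
    thus ?thesis using ch unfolding X_def chordal_completions_def N_def[symmetric] by blast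
  qed
  have liftQ: "one' + y \<in> P" if "y \<in> Q" for y
  proof -
    have "(\<lambda>x. one' + x) ` Q = convex hull ((\<lambda>x. one' + x) ` XQ)"
      unfolding Q_def by (rule convex_hull_translation[symmetric])
    also have "\<dots> \<subseteq> P" unfolding P_def by (rule hull_mono) (use liftX in auto)
    finally show ?thesis using that by auto
  qed
  have lift_a: "a \<bullet> (one' + y) = a \<bullet> y" for y using a_one' by (simp add: inner_add_right)
  have lift_h: "h (one' + y) = b" if "y \<in> Q" for y
  proof -
    have "(\<Sum>f\<in>E'. y $ f) = 0" using Qsupp that disj by (auto intro!: sum.neutral)
    thus ?thesis unfolding h_def using one'one' one'x[of one'] by (simp add: sum.distrib)
  qed
  have validX: "w \<bullet> x \<ge> c0" if x: "x \<in> X" for x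
  proof -
    have xz: "\<forall>f. f \<notin> N \<longrightarrow> x $ f = 0" "\<forall>f\<in>N. x $ f = 0 \<or> x $ f = 1"
      "chordal V (E \<union> {f \<in> N. x $ f = 1})"
      using x unfolding X_def chordal_completions_def N_def by auto
    have wx2: "w \<bullet> x = a \<bullet> x - b * (\<Sum>f\<in>E'. x $ f)" unfolding w_def by (simp add: inner_diff_left one'x)
    show ?thesis
    proof (cases "\<forall>f\<in>E'. x $ f = 1")
      case True
      define y where "y = x - one'"
      have yQ: "y \<in> XQ"
      proof -
        have set: "{f \<in> E2. y $ f = 1} = {f \<in> E2. x $ f = 1}" using disj by (auto simp: y_def one'_def)
        have un: "E \<union> E' \<union> {f \<in> E2. x $ f = 1} = E \<union> {f \<in> N. x $ f = 1}" using True NE by auto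
        have ch: "chordal V (E \<union> E' \<union> {f \<in> E2. y $ f = 1})" unfolding set un by (rule xz(3))
        have "\<forall>f\<in>E2. y $ f = 0 \<or> y $ f = 1" "\<forall>f. f \<notin> E2 \<longrightarrow> y $ f = 0"
          using xz True NE disj by (auto simp: y_def one'_def)
        thus ?thesis using ch unfolding XQ_def chordal_completions_def E2_def[symmetric] by blast
      qed
      have "a \<bullet> x = a \<bullet> y" using lift_a[of y] by (simp add: y_def)
      hence ax: "a \<bullet> x \<ge> b" using facQ(1) XQQ yQ by auto
      have "(\<Sum>f\<in>E'. x $ f) = real (card E')" using True by simp
      thus ?thesis using ax wx2 unfolding c0_def by simp
    next
      case False
      then obtain f where f: "f \<in> E'" "x $ f \<noteq> 1" by auto
      hence xf: "x $ f = 0" using xz NE by auto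
      have cpos: "card E' \<ge> 1" using f by (auto simp: Suc_le_eq card_gt_0_iff)
      have "(\<Sum>g\<in>E'. x $ g) = x $ f + (\<Sum>g\<in>E' - {f}. x $ g)" using f by (simp add: sum.remove)
      also have "\<dots> \<le> 0 + real (card (E' - {f})) * 1"
      proof (intro add_mono sum_bounded_above)
        fix g assume "g \<in> E' - {f}"
        hence "g \<in> N" using NE by auto
        thus "x $ g \<le> 1" using xz(2) by fastforce
      qed (use xf in auto)
      also have "\<dots> = real (card E') - 1" using f cpos by (simp add: of_nat_diff)
      finally have s: "(\<Sum>g\<in>E'. x $ g) \<le> real (card E') - 1" .
      have "a $ g * x $ g \<ge> 0" for g
      proof (cases "g \<in> E2")
        case True
        hence "a $ g \<ge> 0" using apos unfolding E2_def by auto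
        moreover have "x $ g = 0 \<or> x $ g = 1" using True xz(2) NE by blast
        hence "x $ g \<ge> 0" by auto
        ultimately show ?thesis by simp
      qed (use a0' in auto)
      hence ax: "a \<bullet> x \<ge> 0" by (auto simp: inner_vec_def intro!: sum_nonneg)
      have "b * (\<Sum>g\<in>E'. x $ g) \<le> b * (real (card E') - 1)" using s b0 by (rule mult_left_mono)
      thus ?thesis using ax wx2 unfolding c0_def by (simp add: algebra_simps)
    qed
  qed
  have validP: "\<forall>x\<in>P. w \<bullet> x \<ge> c0"
  proof -
    have "P \<subseteq> {x. w \<bullet> x \<ge> c0}" unfolding P_def
      by (rule hull_minimal) (use validX convex_halfspace_ge in auto)
    thus ?thesis by auto
  qed
  define F' where "F' = {x \<in> P. a \<bullet> x = h x}"
  have iffh: "a \<bullet> x = h x \<longleftrightarrow> w \<bullet> x = c0" for x using wx[of x] by linarith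
  have F'eq: "F' = P \<inter> {x. w \<bullet> x = c0}" unfolding F'_def using iffh by auto
  have faceF: "F' face_of P" unfolding F'eq
    by (rule face_of_Int_supporting_hyperplane_ge) (use validP in \<open>auto simp: P_def\<close>)
  have zF: "ind (E' - {f}) \<in> F'" if f: "f \<in> E'" for f
  proof -
    have zX: "ind (E' - {f}) \<in> X"
    proof -
      have set: "{g \<in> N. ind (E' - {f}) $ g = 1} = E' - {f}" using NE by auto
      have ch: "chordal V (E \<union> {g \<in> N. ind (E' - {f}) $ g = 1})" unfolding set using hmin f by auto
      have "\<forall>g\<in>N. ind (E' - {f}) $ g = 0 \<or> ind (E' - {f}) $ g = 1" "\<forall>g. g \<notin> N \<longrightarrow> ind (E' - {f}) $ g = 0"
        using NE by auto
      thus ?thesis using ch unfolding X_def chordal_completions_def N_def[symmetric] by blast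
    qed
    have az: "a \<bullet> ind (E' - {f}) = 0"
      using inner_ind[of "E' - {f}" a] a0' disj by (auto simp: inner_commute intro!: sum.neutral)
    have cpos: "card E' \<ge> 1" using f by (auto simp: Suc_le_eq card_gt_0_iff)
    have "(\<Sum>g\<in>E'. ind (E' - {f}) $ g) = (\<Sum>g\<in>E' - {f}. 1)"
      using f by (simp add: sum.remove)
    also have "\<dots> = real (card E') - 1" using f cpos by (simp add: of_nat_diff)
    finally have "h (ind (E' - {f})) = 0" unfolding h_def by simp
    thus ?thesis using zX XP az unfolding F'_def by auto
  qed
  define q where "q = one' + qQ"
  have qP: "q \<in> P" unfolding q_def using liftQ qQ by auto
  have qF: "q \<notin> F'" unfolding q_def F'_def using lift_a lift_h qQ by auto
  define HP where "HP = affine hull (insert q F')"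
  have affHP: "affine HP" unfolding HP_def by simp
  have HQ_HP: "one' + v \<in> HP" if "v \<in> HQ" for v
  proof -
    have "(\<lambda>x. one' + x) ` HQ = affine hull ((\<lambda>x. one' + x) ` insert qQ FQ)"
      unfolding HQ_def by (rule affine_hull_translation[symmetric])
    also have "\<dots> \<subseteq> HP" unfolding HP_def
    proof (rule hull_mono)
      show "(\<lambda>x. one' + x) ` insert qQ FQ \<subseteq> insert q F'"
        using liftQ lift_a lift_h unfolding q_def F'_def FQ_def by auto
    qed
    finally show ?thesis using that by auto
  qed
  have XHP: "x \<in> HP" if x: "x \<in> X" for x
  proof -
    have xz: "\<forall>f. f \<notin> N \<longrightarrow> x $ f = 0" using x unfolding X_def chordal_completions_def N_def by auto
    have base: "one' \<in> HP" using HQ_HP[OF Z2HQ, of 0] by simp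
    define d where "d = (\<lambda>f. if f \<in> E' then - ind {f} else ind {f} :: real^('a set))"
    define c where "c = (\<lambda>f. if f \<in> E' then 1 - x $ f else x $ f)"
    have step: "one' + d f \<in> HP" if f: "f \<in> N" for f
    proof (cases "f \<in> E'")
      case True
      have "one' + d f = ind (E' - {f})" using True unfolding d_def one'_def by (auto simp: vec_eq_iff)
      thus ?thesis using zF[OF True] unfolding HP_def by (auto intro: hull_inc)
    next
      case False
      hence "f \<in> E2" using f NE by auto
      hence "ind {f} \<in> HQ" by (intro Z2HQ) auto
      thus ?thesis using HQ_HP False unfolding d_def by auto
    qed
    have "one' + (\<Sum>f\<in>N. c f *\<^sub>R d f) \<in> HP"
      by (rule affine_comb[OF affHP base fin step])
    moreover have "one' + (\<Sum>f\<in>N. c f *\<^sub>R d f) = x"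
      unfolding vec_eq_iff
    proof
      fix g
      have dg: "c f * d f $ g = (if g = f then (if g \<in> E' then - c g else c g) else 0)" for f
        unfolding d_def by auto
      have "(\<Sum>f\<in>N. c f *\<^sub>R d f) $ g = (\<Sum>f\<in>N. (if g = f then (if g \<in> E' then - c g else c g) else 0))"
        by (simp add: dg)
      also have "\<dots> = (if g \<in> N then (if g \<in> E' then - c g else c g) else 0)"
        by (simp add: sum.delta)
      finally show "(one' + (\<Sum>f\<in>N. c f *\<^sub>R d f)) $ g = x $ g"
        using xz NE by (auto simp: c_def one'_def)
    qed
    ultimately show ?thesis by simp
  qed
  have PHP: "P \<subseteq> HP" unfolding P_def
    by (rule hull_minimal) (use XHP affine_imp_convex[OF affHP] in auto)
  have "aff_dim P \<le> aff_dim HP" by (rule aff_dim_subset[OF PHP])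
  also have "\<dots> = aff_dim (insert q F')" unfolding HP_def by simp
  also have "\<dots> \<le> aff_dim F' + 1" using aff_dim_insert[of q F'] by (simp split: if_splits)
  finally have d1: "aff_dim P \<le> aff_dim F' + 1" .
  have "F' \<noteq> P" using qP qF by auto
  hence d2: "aff_dim F' < aff_dim P"
    by (intro face_of_aff_dim_lt[OF _ faceF]) (auto simp: P_def)
  have F'ne: "F' \<noteq> {}"
  proof -
    have "one' + y0 \<in> F'" unfolding F'_def using liftQ lift_a lift_h y0 by auto
    thus ?thesis by auto
  qed
  have goalP: "convex hull chordal_completions V E = P" unfolding P_def X_def ..
  have goalh: "(\<lambda>x. b * ((\<Sum>f \<in> E'. x $ f) - real (card E') + 1)) = h" unfolding h_def ..
  have validh: "\<forall>x\<in>P. h x \<le> a \<bullet> x"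
  proof
    fix x assume "x \<in> P"
    hence "c0 \<le> w \<bullet> x" using validP by auto
    thus "h x \<le> a \<bullet> x" using wx[of x] by linarith
  qed
  show ?thesis unfolding a'eq goalP goalh facet_defining_def facet_of_def F'_def[symmetric]
    using validh faceF F'ne d1 d2 by auto
qed

end
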